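(* Fix an integer $k\ge 2$. Then \[ \lim_{r\to\infty}\gamma^{B}_{k,r}=\gamma^{B}_{k}\qquad\text{and}\qquad \lim_{r\to\infty}\gamma_{k,r}=\gamma_{k}, \] where the quantities are as defined in the context (in particular, both limits over $r$ exist).
   Context: Let $\Sigma=\{0,1,\dots,k-1\}$. For strings $u=u_1\cdots u_n$, $v=v_1\cdots v_n\in\Sigma^n$, let $\mathbf{L}(u,v)$ be the length of a longest common subsequence of $u$ and $v$, i.e. the largest $m$ such that there are indices $1\le i_1<\dots<i_m\le n$ and $1\le j_1<\dots<j_m\le n$ with $u_{i_a}=v_{j_a}$ for all $a$. For an integer $r\ge 1$, let $\mathbf{L}_r(u,v)$ be the largest such $m$ subject to the additional requirement $|i_a-j_a|\le r$ for all $a$. Let $\mathbf{EL}^{(k)}_n=k^{-2n}\sum_{u,v\in\Sigma^n}\mathbf{L}(u,v)$ and $\mathbf{EL}_{n,k,r}=k^{-2n}\sum_{u,v\in\Sigma^n}\mathbf{L}_r(u,v)$. Bernoulli Matching model: let $(\epsilon_{ij})_{i,j\ge1}$ be independent random variables with $\Pr(\epsilon_{ij}=1)=1/k$, $\Pr(\epsilon_{ij}=0)=1-1/k$. Let $\mathbf{D}_{n}$ be the largest $m$ such that there are $1\le i_1<\dots<i_m\le n$, $1\le j_1<\dots<j_m\le n$ with $\epsilon_{i_aj_a}=1$ for all $a$, and let $\mathbf{R}_{n,r}$ be the largest such $m$ with the additional requirement $|i_a-j_a|\le r$ for all $a$. Let $\mathbf{EL}^{B(k)}_n=\mathbb{E}\,\mathbf{D}_n$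 and $\mathbf{EL}^{B}_{n,k,r}=\mathbb{E}\,\mathbf{R}_{n,r}$. All four sequences are superadditive in $n$, so the limits $\gamma_k=\lim_n \mathbf{EL}^{(k)}_n/n$, $\gamma_{k,r}=\lim_n\mathbf{EL}_{n,k,r}/n$, $\gamma^B_k=\lim_n\mathbf{EL}^{B(k)}_n/n$, $\gamma^B_{k,r}=\lim_n\mathbf{EL}^B_{n,k,r}/n$ exist. *)

theory Defs
  imports Complex_Main
begin

definition cs_ok :: "nat \<Rightarrow> (nat \<Rightarrow> nat \<Rightarrow> bool) \<Rightarrow> nat \<Rightarrow> (nat \<Rightarrow> nat) \<Rightarrow> (nat \<Rightarrow> nat) \<Rightarrow> bool" where
  "cs_ok n P m I J \<longleftrightarrow>
     (\<forall>a<m. 1 \<le> I a \<and> I a \<le> n \<and> 1 \<le> J a \<and> J a \<le> n \<and> P (I a) (J a)) \<and>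
     (\<forall>a b. a < b \<and> b < m \<longrightarrow> I a < I b \<and> J a < J b)"

definition lcsP :: "nat \<Rightarrow> (nat \<Rightarrow> nat \<Rightarrow> bool) \<Rightarrow> nat" where
  "lcsP n P = Max {m. \<exists>I J. cs_ok n P m I J}"

definition lcsPr :: "nat \<Rightarrow> nat \<Rightarrow> (nat \<Rightarrow> nat \<Rightarrow> bool) \<Rightarrow> nat" where
  "lcsPr n r P = Max {m. \<exists>I J. cs_ok n P m I J \<and> (\<forall>a<m. \<bar>int (I a) - int (J a)\<bar> \<le> int r)}"

text \<open>Strings of length n over the alphabet {0,...,k-1}; position i (1-based) is u ! (i-1).\<close>
definition strs :: "nat \<Rightarrow> nat \<Rightarrow> nat list set" where
  "strs k n = {u. length u = n \<and> set u \<subseteq> {..<k}}"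

definition L :: "nat list \<Rightarrow> nat list \<Rightarrow> nat" where
  "L u v = lcsP (length u) (\<lambda>i j. u ! (i - 1) = v ! (j - 1))"

definition Lr :: "nat \<Rightarrow> nat list \<Rightarrow> nat list \<Rightarrow> nat" where
  "Lr r u v = lcsPr (length u) r (\<lambda>i j. u ! (i - 1) = v ! (j - 1))"

definition EL :: "nat \<Rightarrow> nat \<Rightarrow> real" where
  "EL k n = (\<Sum>u\<in>strs k n. \<Sum>v\<in>strs k n. real (L u v)) / real k ^ (2 * n)"

definition ELr :: "nat \<Rightarrow> nat \<Rightarrow> nat \<Rightarrow> real" where
  "ELr n k r = (\<Sum>u\<in>strs k n. \<Sum>v\<in>strs k n. real (Lr r u v)) / real k ^ (2 * n)"

text \<open>Bernoulli matching model: configurations of (eps_ij)_{1<=i,j<=n}, encoded as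
  boolean matrices vanishing outside {1..n} x {1..n}, with their probabilities.\<close>
definition bmats :: "nat \<Rightarrow> (nat \<Rightarrow> nat \<Rightarrow> bool) set" where
  "bmats n = {e. \<forall>i j. e i j \<longrightarrow> i \<in> {1..n} \<and> j \<in> {1..n}}"

definition bweight :: "nat \<Rightarrow> nat \<Rightarrow> (nat \<Rightarrow> nat \<Rightarrow> bool) \<Rightarrow> real" where
  "bweight k n e =
     (let ones = card {(i, j). i \<in> {1..n} \<and> j \<in> {1..n} \<and> e i j}
      in (1 / real k) ^ ones * (1 - 1 / real k) ^ (n * n - ones))"

definition ELB :: "nat \<Rightarrow> nat \<Rightarrow> real" where
  "ELB k n = (\<Sum>e\<in>bmats n. bweight k n e * real (lcsP n e))"

definition ELBr :: "nat \<Rightarrow> nat \<Rightarrow> nat \<Rightarrow> real" where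
  "ELBr n k r = (\<Sum>e\<in>bmats n. bweight k n e * real (lcsPr n r e))"

definition gamma :: "nat \<Rightarrow> real" where
  "gamma k = lim (\<lambda>n. EL k n / real n)"

definition gamma_r :: "nat \<Rightarrow> nat \<Rightarrow> real" where
  "gamma_r k r = lim (\<lambda>n. ELr n k r / real n)"

definition gammaB :: "nat \<Rightarrow> real" where
  "gammaB k = lim (\<lambda>n. ELB k n / real n)"

definition gammaB_r :: "nat \<Rightarrow> nat \<Rightarrow> real" where
  "gammaB_r k r = lim (\<lambda>n. ELBr n k r / real n)"

end

theory Submission
  imports Defs
begin


lemma cs_ok_bound:
  assumes "cs_ok n P m I J" shows "m \<le> n"
proof (cases m)
  case 0 then show ?thesis by simp
next
  case (Suc m')
  have "\<forall>a<m. a + 1 \<le> I a"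
  proof (intro allI impI)
    fix a assume "a < m"
    then show "a + 1 \<le> I a"
    proof (induction a)
      case 0 then show ?case using assms unfolding cs_ok_def by auto
    next
      case (Suc a)
      then have "I a < I (Suc a)" using assms unfolding cs_ok_def by auto
      with Suc show ?case by auto
    qed
  qed
  then have "m \<le> I m'" using Suc by auto
  moreover have "I m' \<le> n" using assms Suc unfolding cs_ok_def by auto
  ultimately show ?thesis by simp
qed

definition WS :: "nat \<Rightarrow> nat \<Rightarrow> (nat \<Rightarrow> nat \<Rightarrow> bool) \<Rightarrow> nat set" where
  "WS n r P = {m. \<exists>I J. cs_ok n P m I J \<and> (\<forall>a<m. \<bar>int (I a) - int (J a)\<bar> \<le> int r)}"

lemma WS_fin: "finite (WS n r P)"
  by (rule finite_subset[of _ "{..n}"]) (auto simp: WS_def dest: cs_ok_bound)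

lemma WS_0: "0 \<in> WS n r P"
  by (auto simp: WS_def cs_ok_def)

lemma lcsPr_WS: "lcsPr n r P = Max (WS n r P)"
  by (simp add: lcsPr_def WS_def)

lemma lcsPr_ge:
  assumes "cs_ok n P m I J" "\<forall>a<m. \<bar>int (I a) - int (J a)\<bar> \<le> int r"
  shows "m \<le> lcsPr n r P"
  unfolding lcsPr_WS using assms WS_fin by (intro Max_ge) (auto simp: WS_def)

lemma lcsPr_wit:
  "\<exists>I J. cs_ok n P (lcsPr n r P) I J \<and> (\<forall>a<lcsPr n r P. \<bar>int (I a) - int (J a)\<bar> \<le> int r)"
proof -
  have "lcsPr n r P \<in> WS n r P" unfolding lcsPr_WS using WS_fin[of n r P] WS_0[of n r P] by (intro Max_in) auto
  then show ?thesis by (simp add: WS_def)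
qed

lemma lcsPr_le_n: "lcsPr n r P \<le> n"
  using lcsPr_wit[of n P r] cs_ok_bound by blast

lemma lcsP_eq:
  assumes "n \<le> r + 1" shows "lcsPr n r P = lcsP n P"
proof -
  have "{m. \<exists>I J. cs_ok n P m I J} = WS n r P"
  proof (auto simp: WS_def)
    fix m I J assume c: "cs_ok n P m I J"
    have "\<forall>a<m. \<bar>int (I a) - int (J a)\<bar> \<le> int r"
      using c assms unfolding cs_ok_def by fastforce
    with c show "\<exists>I J. cs_ok n P m I J \<and> (\<forall>a<m. \<bar>int (I a) - int (J a)\<bar> \<le> int r)" by blast
  qed
  then show ?thesis by (simp add: lcsP_def lcsPr_WS)
qed

lemma lcsPr_le_lcsP: "lcsPr n r P \<le> lcsP n P"
proof -
  obtain I J where "cs_ok n P (lcsPr n r P) I J" using lcsPr_wit by blast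
  then have "lcsPr n r P \<le> lcsPr n n P" by (intro lcsPr_ge) (auto simp: cs_ok_def)
  then show ?thesis using lcsP_eq[of n n P] by simp
qed

lemma lcsPr_super:
  "lcsPr n r P + lcsPr m r (\<lambda>i j. P (i + n) (j + n)) \<le> lcsPr (n + m) r P"
proof -
  obtain I1 J1 where w1: "cs_ok n P (lcsPr n r P) I1 J1"
    "\<forall>a<lcsPr n r P. \<bar>int (I1 a) - int (J1 a)\<bar> \<le> int r" using lcsPr_wit by blast
  obtain I2 J2 where w2: "cs_ok m (\<lambda>i j. P (i + n) (j + n)) (lcsPr m r (\<lambda>i j. P (i + n) (j + n))) I2 J2"
    "\<forall>a<lcsPr m r (\<lambda>i j. P (i + n) (j + n)). \<bar>int (I2 a) - int (J2 a)\<bar> \<le> int r" using lcsPr_wit by blast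
  define m1 where "m1 = lcsPr n r P"
  define m2 where "m2 = lcsPr m r (\<lambda>i j. P (i + n) (j + n))"
  define I where "I a = (if a < m1 then I1 a else I2 (a - m1) + n)" for a
  define J where "J a = (if a < m1 then J1 a else J2 (a - m1) + n)" for a
  have "cs_ok (n + m) P (m1 + m2) I J"
    unfolding cs_ok_def
  proof (rule conjI; intro allI impI)
    fix a assume a: "a < m1 + m2"
    show "1 \<le> I a \<and> I a \<le> n + m \<and> 1 \<le> J a \<and> J a \<le> n + m \<and> P (I a) (J a)"
    proof (cases "a < m1")
      case True then show ?thesis
      using w1(1) unfolding cs_ok_def I_def J_def m1_def[symmetric] by auto
    next
      case False
      then have "a - m1 < m2" using a by auto
      then show ?thesis using False
      using w2(1) unfolding cs_ok_def I_def J_def m1_def[symmetric] m2_def[symmetric] by auto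
    qed
  next
    fix a b assume ab: "a < b \<and> b < m1 + m2"
    show "I a < I b \<and> J a < J b"
    proof (cases "b < m1")
      case True then show ?thesis using ab
        using w1(1) unfolding cs_ok_def I_def J_def m1_def[symmetric] by auto
    next
      case False
      then have b2: "b - m1 < m2" using ab by auto
      show ?thesis
      proof (cases "a < m1")
        case True
        then show ?thesis using False b2 w1(1) w2(1)
          unfolding cs_ok_def I_def J_def m1_def[symmetric] m2_def[symmetric]
          by (smt (verit, best) add_leE add_le_mono le_eq_less_or_eq not_less_eq_eq plus_1_eq_Suc)
      next
        case False
        then have "a - m1 < b - m1" using ab by auto
        then show ?thesis using False \<open>\<not> b < m1\<close> b2 w2(1)
          unfolding cs_ok_def I_def J_def m2_def[symmetric] by auto
      qed
    qed
  qed
  moreover have "\<forall>a<m1 + m2. \<bar>int (I a) - int (J a)\<bar> \<le> int r"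
    using w1(2) w2(2) unfolding I_def J_def m1_def[symmetric] m2_def[symmetric] by auto
  ultimately have "m1 + m2 \<le> lcsPr (n + m) r P" by (rule lcsPr_ge)
  then show ?thesis by (simp add: m1_def m2_def)
qed

lemma lcsP_super:
  "lcsP n P + lcsP m (\<lambda>i j. P (i + n) (j + n)) \<le> lcsP (n + m) P"
  using lcsPr_super[of n "n+m" P m] lcsP_eq[of n "n+m" P] lcsP_eq[of m "n+m"] lcsP_eq[of "n+m" "n+m" P]
  by simp

lemma lcsP_le_n: "lcsP n P \<le> n"
  using lcsPr_le_n[of n n P] lcsP_eq[of n n P] by simp

lemma lcsPr_cong:
  assumes "\<And>i j. 1 \<le> i \<Longrightarrow> i \<le> n \<Longrightarrow> 1 \<le> j \<Longrightarrow> j \<le> n \<Longrightarrow> P i j = Q i j"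
  shows "lcsPr n r P = lcsPr n r Q"
proof -
  have "cs_ok n P m I J = cs_ok n Q m I J" for m I J
    using assms unfolding cs_ok_def by blast
  then show ?thesis by (simp add: lcsPr_def)
qed

lemma lcsP_cong:
  assumes "\<And>i j. 1 \<le> i \<Longrightarrow> i \<le> n \<Longrightarrow> 1 \<le> j \<Longrightarrow> j \<le> n \<Longrightarrow> P i j = Q i j"
  shows "lcsP n P = lcsP n Q"
  using lcsPr_cong[of n P Q n, OF assms] lcsP_eq[of n n] by simp



lemma superadd_mult:
  fixes a :: "nat \<Rightarrow> real"
  assumes sup: "\<And>n m. a n + a m \<le> a (n+m)" and nn: "\<And>n. 0 \<le> a n"
  shows "real q * a m \<le> a (q * m)"
proof (induction q)
  case 0
  show ?case using nn[of 0] by simp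
next
  case (Suc q)
  have "a (q*m) + a m \<le> a (q*m + m)" by (rule sup)
  then show ?case using Suc by (simp add: algebra_simps)
qed

lemma fekete:
  fixes a :: "nat \<Rightarrow> real"
  assumes sup: "\<And>n m. a n + a m \<le> a (n+m)" and nn: "\<And>n. 0 \<le> a n"
    and bd: "\<And>n. a n \<le> real n"
  shows "(\<lambda>n. a n / real n) \<longlonglongrightarrow> (SUP n\<in>{1..}. a n / real n)"
    and "\<And>n. n \<ge> 1 \<Longrightarrow> a n / real n \<le> (SUP n\<in>{1..}. a n / real n)"
proof -
  define S where "S = (SUP n\<in>{1..}. a n / real n)"
  have bdd: "bdd_above ((\<lambda>n. a n / real n) ` {1..})"
    by (rule bdd_aboveI[of _ 1]) (use bd in \<open>auto simp: divide_le_eq\<close>)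
  show up: "a n / real n \<le> (SUP n\<in>{1..}. a n / real n)" if "n \<ge> 1" for n
    using bdd that by (intro cSUP_upper) auto
  show "(\<lambda>n. a n / real n) \<longlonglongrightarrow> (SUP n\<in>{1..}. a n / real n)"
    unfolding S_def[symmetric] lim_sequentially
  proof (intro allI impI)
    fix e :: real assume e: "e > 0"
    have "S - e/2 < S" using e by simp
    then obtain m where m: "m \<in> {1..}" "S - e/2 < a m / real m"
      unfolding S_def using less_cSUP_iff[OF _ bdd] by blast
    define N where "N = nat \<lceil>2 * real m / e\<rceil> + 1"
    have "\<forall>n\<ge>N. dist (a n / real n) S < e"
    proof (intro allI impI)
      fix n assume nN: "n \<ge> N"
      have n1: "n \<ge> 1" using nN by (simp add: N_def)
      have mpos: "real m > 0" using m by auto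
      have npos: "real n > 0" using n1 by auto
      have nbig: "real n > 2 * real m / e" using nN unfolding N_def by linarith
      have mn: "real m / real n < e / 2"
        using nbig e npos mpos by (simp add: field_simps)
      define q where "q = n div m"
      have qm: "q * m \<le> n" by (simp add: q_def)
      have qm2: "real n - real m \<le> real q * real m"
      proof -
        have "n = q * m + n mod m" by (simp add: q_def)
        moreover have "n mod m < m" using m by auto
        ultimately have "n \<le> q * m + m" by linarith
        then show ?thesis by (metis of_nat_add of_nat_le_iff of_nat_mult diff_le_eq)
      qed
      have "real q * a m \<le> a (q*m)" by (rule superadd_mult[OF sup nn])
      also have "a (q*m) \<le> a n"
        using sup[of "q*m" "n - q*m"] nn[of "n - q*m"] qm by simp
      finally have an: "real q * a m \<le> a n" .
      have am1: "a m / real m \<le> 1" using bd[of m] mpos by (simp add: divide_le_eq)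
      have am0: "a m / real m \<ge> 0" using nn[of m] mpos by simp
      have "(real n - real m) * (a m / real m) \<le> real q * real m * (a m / real m)"
        using qm2 am0 by (rule mult_right_mono)
      also have "\<dots> = real q * a m" using mpos by simp
      finally have "(real n - real m) * (a m / real m) \<le> a n" using an by linarith
      then have "(real n - real m) * (a m / real m) / real n \<le> a n / real n"
        by (rule divide_right_mono) (use npos in simp)
      moreover have "(real n - real m) * (a m / real m) / real n
          = a m / real m - (real m / real n) * (a m / real m)"
        using npos by (simp add: field_simps)
      moreover have "(real m / real n) * (a m / real m) \<le> real m / real n"
        using bd[of m] mpos npos by (simp add: divide_right_mono)
      ultimately have lo: "a n / real n > S - e" using m(2) mn by linarith
      have hi: "a n / real n \<le> S" using up[OF n1] by (simp add: S_def)
      show "dist (a n / real n) S < e" using lo hi by (simp add: dist_real_def)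
    qed
    then show "\<exists>N. \<forall>n\<ge>N. dist (a n / real n) S < e" by blast
  qed
qed

lemma squeeze_lim:
  fixes a :: "nat \<Rightarrow> real" and b :: "nat \<Rightarrow> nat \<Rightarrow> real"
  assumes supa: "\<And>n m. a n + a m \<le> a (n+m)" and nna: "\<And>n. 0 \<le> a n"
    and bda: "\<And>n. a n \<le> real n"
    and supb: "\<And>r n m. b r n + b r m \<le> b r (n+m)" and nnb: "\<And>r n. 0 \<le> b r n"
    and le: "\<And>r n. b r n \<le> a n" and eq: "\<And>r n. n \<le> r + 1 \<Longrightarrow> b r n = a n"
  shows "(\<lambda>r. lim (\<lambda>n. b r n / real n)) \<longlonglongrightarrow> lim (\<lambda>n. a n / real n)"
proof -
  define G where "G = (SUP n\<in>{1..}. a n / real n)"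
  define Gr where "Gr r = (SUP n\<in>{1..}. b r n / real n)" for r
  have bdb: "b r n \<le> real n" for r n using le[of r n] bda[of n] by linarith
  note fa = fekete[of a, OF supa nna bda]
  have la: "lim (\<lambda>n. a n / real n) = G" using fa(1) limI unfolding G_def by blast
  have lb: "lim (\<lambda>n. b r n / real n) = Gr r" for r using fekete(1)[of "b r", OF supb nnb bdb] limI unfolding Gr_def by blast
  have up: "Gr r \<le> G" for r
    unfolding Gr_def
  proof (rule cSUP_least)
    fix n :: nat assume "n \<in> {1..}"
    then have "b r n / real n \<le> a n / real n" using le[of r n] by (simp add: divide_right_mono)
    also have "\<dots> \<le> G" using fa(2)[of n] \<open>n \<in> {1..}\<close> by (simp add: G_def)
    finally show "b r n / real n \<le> G" .
  qed simp
  have lo: "a (Suc r) / real (Suc r) \<le> Gr r" for r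
    using fekete(2)[of "b r", OF supb nnb bdb, of "Suc r"] eq[of "Suc r" r] by (simp add: Gr_def)
  have t1: "(\<lambda>r. a (Suc r) / real (Suc r)) \<longlonglongrightarrow> G"
    using fa(1) unfolding G_def by (rule LIMSEQ_Suc)
  have "Gr \<longlonglongrightarrow> G"
    by (rule tendsto_sandwich[OF _ _ t1 tendsto_const]) (use lo up in auto)
  then show ?thesis using la lb by simp
qed



definition MM :: "(nat \<times> nat) set \<Rightarrow> (nat \<times> nat \<Rightarrow> bool) set" where
  "MM C = {g. \<forall>x. g x \<longrightarrow> x \<in> C}"

definition WW :: "real \<Rightarrow> (nat \<times> nat) set \<Rightarrow> (nat \<times> nat \<Rightarrow> bool) \<Rightarrow> real" where
  "WW p C g = (\<Prod>x\<in>C. if g x then p else 1 - p)"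

lemma MM_fin: assumes "finite C" shows "finite (MM C)"
proof -
  have "MM C = (\<lambda>S x. x \<in> S) ` Pow C"
  proof (auto simp: MM_def)
    fix g :: "nat\<times>nat \<Rightarrow> bool" assume "\<forall>a b. g (a, b) \<longrightarrow> (a, b) \<in> C"
    then show "g \<in> (\<lambda>S x. x \<in> S) ` Pow C"
      by (intro image_eqI[of _ _ "{x. g x}"]) auto
  qed
  then show ?thesis using assms by simp
qed

lemma WW_nonneg: "0 \<le> p \<Longrightarrow> p \<le> 1 \<Longrightarrow> 0 \<le> WW p C g"
  unfolding WW_def by (intro prod_nonneg) auto

lemma WW_total:
  assumes "finite D" shows "(\<Sum>g\<in>MM D. WW p D g) = 1"
  using assms
proof (induction D rule: finite_induct)
  case empty
  have "MM {} = {\<lambda>_. False}" by (auto simp: MM_def)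
  then show ?case by (simp add: WW_def)
next
  case (insert d D)
  have split: "MM (insert d D) = MM D \<union> (\<lambda>g. g(d := True)) ` MM D"
  proof (rule set_eqI, rule iffI)
    fix g assume g: "g \<in> MM (insert d D)"
    show "g \<in> MM D \<union> (\<lambda>g. g(d := True)) ` MM D"
    proof (cases "g d")
      case True
      have "g(d := False) \<in> MM D" using g by (auto simp: MM_def)
      moreover have "g = (g(d := False))(d := True)" using True by (auto simp: fun_eq_iff)
      ultimately show ?thesis by blast
    next
      case False
      then have "g \<in> MM D" using g unfolding MM_def by auto
      then show ?thesis by blast
    qed
  next
    fix g assume "g \<in> MM D \<union> (\<lambda>g. g(d := True)) ` MM D"
    then show "g \<in> MM (insert d D)" unfolding MM_def by (auto split: if_splits)
  qed
  have disj: "MM D \<inter> (\<lambda>g. g(d := True)) ` MM D = {}"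
  proof (rule ccontr)
    assume "MM D \<inter> (\<lambda>g. g(d := True)) ` MM D \<noteq> {}"
    then obtain g where "g(d := True) \<in> MM D" by blast
    then have "d \<in> D" unfolding MM_def using fun_upd_same[of g d True] by blast
    with insert(2) show False by simp
  qed
  have inj: "inj_on (\<lambda>g. g(d := True)) (MM D)"
  proof (rule inj_onI)
    fix g h assume gD: "g \<in> MM D" and hD: "h \<in> MM D" and eq: "g(d := True) = h(d := True)"
    show "g = h"
    proof
      fix x show "g x = h x"
      proof (cases "x = d")
        case True then show ?thesis using gD hD insert(2) unfolding MM_def by blast
      next
        case False then show ?thesis using fun_cong[OF eq, of x] by simp
      qed
    qed
  qed
  have w1: "WW p (insert d D) g = (1 - p) * WW p D g" if "g \<in> MM D" for g
  proof -
    have "\<not> g d" using that insert(2) unfolding MM_def by blast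
    then show ?thesis by (simp add: WW_def insert(1,2))
  qed
  have w2: "WW p (insert d D) (g(d := True)) = p * WW p D g" if "g \<in> MM D" for g
  proof -
    have "WW p (insert d D) (g(d := True)) = p * (\<Prod>x\<in>D. if (g(d := True)) x then p else 1 - p)"
      using insert by (simp add: WW_def)
    also have "(\<Prod>x\<in>D. if (g(d := True)) x then p else 1 - p) = WW p D g"
      unfolding WW_def using insert by (intro prod.cong) auto
    finally show ?thesis .
  qed
  have "(\<Sum>g\<in>MM (insert d D). WW p (insert d D) g)
      = (\<Sum>g\<in>MM D. WW p (insert d D) g) + (\<Sum>g\<in>(\<lambda>g. g(d := True)) ` MM D. WW p (insert d D) g)"
    unfolding split using disj MM_fin[OF insert(1)] by (intro sum.union_disjoint) auto
  also have "\<dots> = (\<Sum>g\<in>MM D. (1 - p) * WW p D g) + (\<Sum>g\<in>MM D. p * WW p D g)"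
    using w1 w2 by (simp add: sum.reindex[OF inj])
  also have "\<dots> = 1" using insert(3) by (simp add: sum_distrib_left[symmetric])
  finally show ?case .
qed

lemma marg:
  assumes fC: "finite C" and fD: "finite D" and disj: "C \<inter> D = {}"
    and fres: "\<And>g. f g = f (\<lambda>x. g x \<and> x \<in> C)"
  shows "(\<Sum>g\<in>MM (C \<union> D). WW p (C \<union> D) g * f g) = (\<Sum>g\<in>MM C. WW p C g * f g)"
proof -
  have eq: "(\<Sum>gg\<in>MM C \<times> MM D. WW p C (fst gg) * WW p D (snd gg) * f (fst gg))
     = (\<Sum>g\<in>MM (C \<union> D). WW p (C \<union> D) g * f g)"
  proof (rule sum.reindex_bij_witness[where i = "\<lambda>g. ((\<lambda>x. g x \<and> x \<in> C), (\<lambda>x. g x \<and> x \<in> D))"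
        and j = "\<lambda>gg x. fst gg x \<or> snd gg x"])
    fix gg assume "gg \<in> MM C \<times> MM D"
    then show "((\<lambda>x. (fst gg x \<or> snd gg x) \<and> x \<in> C), (\<lambda>x. (fst gg x \<or> snd gg x) \<and> x \<in> D)) = gg"
      using disj by (cases gg) (auto simp: MM_def fun_eq_iff)
  next
    fix gg assume "gg \<in> MM C \<times> MM D"
    then show "(\<lambda>x. fst gg x \<or> snd gg x) \<in> MM (C \<union> D)"
      by (auto simp: MM_def)
  next
    fix g assume "g \<in> MM (C \<union> D)"
    then show "(\<lambda>x. fst ((\<lambda>x. g x \<and> x \<in> C), (\<lambda>x. g x \<and> x \<in> D)) x \<or>
              snd ((\<lambda>x. g x \<and> x \<in> C), (\<lambda>x. g x \<and> x \<in> D)) x) = g"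
      by (auto simp: MM_def fun_eq_iff)
  next
    fix g assume "g \<in> MM (C \<union> D)"
    then show "((\<lambda>x. g x \<and> x \<in> C), (\<lambda>x. g x \<and> x \<in> D)) \<in> MM C \<times> MM D"
      by (auto simp: MM_def)
  next
    fix gg assume gg: "gg \<in> MM C \<times> MM D"
    obtain g1 g2 where g: "gg = (g1, g2)" by (cases gg)
    have g1: "g1 \<in> MM C" and g2: "g2 \<in> MM D" using gg g by auto
    have "WW p (C \<union> D) (\<lambda>x. g1 x \<or> g2 x)
        = (\<Prod>x\<in>C. if g1 x \<or> g2 x then p else 1 - p) * (\<Prod>x\<in>D. if g1 x \<or> g2 x then p else 1 - p)"
      unfolding WW_def using fC fD disj by (rule prod.union_disjoint)
    also have "(\<Prod>x\<in>C. if g1 x \<or> g2 x then p else 1 - p) = WW p C g1"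
      unfolding WW_def using g2 disj by (intro prod.cong) (auto simp: MM_def)
    also have "(\<Prod>x\<in>D. if g1 x \<or> g2 x then p else 1 - p) = WW p D g2"
      unfolding WW_def using g1 disj by (intro prod.cong) (auto simp: MM_def)
    finally have w: "WW p (C \<union> D) (\<lambda>x. g1 x \<or> g2 x) = WW p C g1 * WW p D g2" .
    have "f (\<lambda>x. g1 x \<or> g2 x) = f (\<lambda>x. (g1 x \<or> g2 x) \<and> x \<in> C)" by (rule fres)
    also have "(\<lambda>x. (g1 x \<or> g2 x) \<and> x \<in> C) = g1"
      using g1 g2 disj by (auto simp: MM_def fun_eq_iff)
    finally have "f (\<lambda>x. g1 x \<or> g2 x) = f g1" .
    then show "WW p (C \<union> D) (\<lambda>x. fst gg x \<or> snd gg x) * f (\<lambda>x. fst gg x \<or> snd gg x)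
       = WW p C (fst gg) * WW p D (snd gg) * f (fst gg)"
      using w g by simp
  qed
  then have "(\<Sum>g\<in>MM (C \<union> D). WW p (C \<union> D) g * f g) = (\<Sum>g1\<in>MM C. \<Sum>g2\<in>MM D. WW p C g1 * WW p D g2 * f g1)"
    by (simp add: sum.cartesian_product split_beta)
  also have "\<dots> = (\<Sum>g1\<in>MM C. WW p C g1 * f g1 * (\<Sum>g2\<in>MM D. WW p D g2))"
    by (simp add: sum_distrib_left mult_ac)
  also have "\<dots> = (\<Sum>g\<in>MM C. WW p C g * f g)" using WW_total[OF fD] by simp
  finally show ?thesis .
qed



definition BX :: "nat \<Rightarrow> (nat \<times> nat) set" where
  "BX n = {1..n} \<times> {1..n}"

lemma BX_fin: "finite (BX n)" by (simp add: BX_def)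

lemma curry_inj: "inj_on curry A"
  by (rule inj_onI) (metis case_prod_curry)

lemma bmats_eq: "bmats n = curry ` MM (BX n)"
proof (rule set_eqI, rule iffI)
  fix e assume "e \<in> bmats n"
  then have "case_prod e \<in> MM (BX n)" by (auto simp: bmats_def MM_def BX_def)
  moreover have "e = curry (case_prod e)" by simp
  ultimately show "e \<in> curry ` MM (BX n)" by blast
next
  fix e assume "e \<in> curry ` MM (BX n)"
  then show "e \<in> bmats n" by (auto simp: bmats_def MM_def BX_def)
qed

lemma bweight_eq:
  assumes "g \<in> MM (BX n)"
  shows "bweight k n (curry g) = WW (1 / real k) (BX n) g"
proof -
  have o: "{(i, j). i \<in> {1..n} \<and> j \<in> {1..n} \<and> curry g i j} = BX n \<inter> {x. g x}"
    by (auto simp: BX_def)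
  have c: "card (BX n) = n * n" by (simp add: BX_def)
  have c2: "card (BX n \<inter> - {x. g x}) = n * n - card (BX n \<inter> {x. g x})"
  proof -
    have "BX n \<inter> - {x. g x} = BX n - (BX n \<inter> {x. g x})" by blast
    then show ?thesis using c BX_fin by (simp add: card_Diff_subset)
  qed
  have "WW (1 / real k) (BX n) g = (1 / real k) ^ card (BX n \<inter> {x. g x}) * (1 - 1 / real k) ^ card (BX n \<inter> - {x. g x})"
    unfolding WW_def by (simp add: prod.If_cases[OF BX_fin])
  then show ?thesis unfolding bweight_def Let_def o c2 by simp
qed

lemma sum_bmats:
  "(\<Sum>e\<in>bmats n. bweight k n e * h e) = (\<Sum>g\<in>MM (BX n). WW (1 / real k) (BX n) g * h (curry g))"
  unfolding bmats_eq by (simp add: sum.reindex[OF curry_inj] bweight_eq)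

definition EB :: "real \<Rightarrow> (nat \<Rightarrow> (nat \<Rightarrow> nat \<Rightarrow> bool) \<Rightarrow> nat) \<Rightarrow> nat \<Rightarrow> real" where
  "EB p F n = (\<Sum>g\<in>MM (BX n). WW p (BX n) g * real (F n (curry g)))"

lemma EB_super:
  assumes p: "0 \<le> p" "p \<le> 1"
    and cong: "\<And>n e e'. (\<And>i j. 1 \<le> i \<Longrightarrow> i \<le> n \<Longrightarrow> 1 \<le> j \<Longrightarrow> j \<le> n \<Longrightarrow> e i j = e' i j)
        \<Longrightarrow> F n e = F n e'"
    and sup: "\<And>n m e. F n e + F m (\<lambda>i j. e (i + n) (j + n)) \<le> F (n + m) e"
  shows "EB p F n + EB p F m \<le> EB p F (n + m)"
proof -
  define B1 where "B1 = BX n"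
  define B2 where "B2 = {n+1..n+m} \<times> {n+1..n+m}"
  define BN where "BN = BX (n + m)"
  have fB1: "finite B1" and fB2: "finite B2" and fBN: "finite BN"
    by (auto simp: B1_def B2_def BN_def BX_def)
  have s1: "BN = B1 \<union> (BN - B1)" by (auto simp: B1_def BN_def BX_def)
  have s2: "BN = B2 \<union> (BN - B2)" by (auto simp: B2_def BN_def BX_def)
  have "(\<Sum>g\<in>MM BN. WW p BN g * real (F n (curry g)) + WW p BN g * real (F m (\<lambda>i j. curry g (i + n) (j + n))))
      \<le> (\<Sum>g\<in>MM BN. WW p BN g * real (F (n + m) (curry g)))"
  proof (rule sum_mono)
    fix g
    have "real (F n (curry g)) + real (F m (\<lambda>i j. curry g (i + n) (j + n))) \<le> real (F (n + m) (curry g))"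
      using sup[of n "curry g" m] by linarith
    then have "WW p BN g * (real (F n (curry g)) + real (F m (\<lambda>i j. curry g (i + n) (j + n))))
        \<le> WW p BN g * real (F (n + m) (curry g))"
      by (rule mult_left_mono) (rule WW_nonneg[OF p])
    then show "WW p BN g * real (F n (curry g)) + WW p BN g * real (F m (\<lambda>i j. curry g (i + n) (j + n)))
        \<le> WW p BN g * real (F (n + m) (curry g))" by (simp add: algebra_simps)
  qed
  then have main: "(\<Sum>g\<in>MM BN. WW p BN g * real (F n (curry g))) + (\<Sum>g\<in>MM BN. WW p BN g * real (F m (\<lambda>i j. curry g (i + n) (j + n))))
      \<le> EB p F (n + m)" unfolding EB_def BN_def[symmetric] by (simp add: sum.distrib)
  have T1: "(\<Sum>g\<in>MM BN. WW p BN g * real (F n (curry g))) = EB p F n"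
  proof -
    have "(\<Sum>g\<in>MM (B1 \<union> (BN - B1)). WW p (B1 \<union> (BN - B1)) g * real (F n (curry g)))
        = (\<Sum>g\<in>MM B1. WW p B1 g * real (F n (curry g)))"
    proof (rule marg[OF fB1])
      show "finite (BN - B1)" using fBN by simp
      show "B1 \<inter> (BN - B1) = {}" by blast
      fix g :: "nat \<times> nat \<Rightarrow> bool"
      show "real (F n (curry g)) = real (F n (curry (\<lambda>x. g x \<and> x \<in> B1)))"
        by (rule arg_cong[where f = real], rule cong) (auto simp: B1_def BX_def)
    qed
    then show ?thesis using s1 by (simp add: EB_def B1_def)
  qed
  have T2a: "(\<Sum>g\<in>MM BN. WW p BN g * real (F m (\<lambda>i j. curry g (i + n) (j + n))))
      = (\<Sum>g\<in>MM B2. WW p B2 g * real (F m (\<lambda>i j. curry g (i + n) (j + n))))"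
  proof -
    have "(\<Sum>g\<in>MM (B2 \<union> (BN - B2)). WW p (B2 \<union> (BN - B2)) g * real (F m (\<lambda>i j. curry g (i + n) (j + n))))
        = (\<Sum>g\<in>MM B2. WW p B2 g * real (F m (\<lambda>i j. curry g (i + n) (j + n))))"
    proof (rule marg[OF fB2])
      show "finite (BN - B2)" using fBN by simp
      show "B2 \<inter> (BN - B2) = {}" by blast
      fix g :: "nat \<times> nat \<Rightarrow> bool"
      show "real (F m (\<lambda>i j. curry g (i + n) (j + n))) = real (F m (\<lambda>i j. curry (\<lambda>x. g x \<and> x \<in> B2) (i + n) (j + n)))"
        by (rule arg_cong[where f = real], rule cong) (auto simp: B2_def)
    qed
    then show ?thesis using s2 by simp
  qed
  define \<sigma> where "\<sigma> x = (fst x + n, snd x + n)" for x :: "nat \<times> nat"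
  have T2b: "(\<Sum>g\<in>MM B2. WW p B2 g * real (F m (\<lambda>i j. curry g (i + n) (j + n)))) = EB p F m"
    unfolding EB_def
  proof (rule sum.reindex_bij_witness[where j = "\<lambda>g. g \<circ> \<sigma>"
        and i = "\<lambda>h x. x \<in> B2 \<and> h (fst x - n, snd x - n)"])
    fix g assume g: "g \<in> MM B2"
    show "(\<lambda>x. x \<in> B2 \<and> (g \<circ> \<sigma>) (fst x - n, snd x - n)) = g"
    proof
      fix x :: "nat \<times> nat"
      show "(x \<in> B2 \<and> (g \<circ> \<sigma>) (fst x - n, snd x - n)) = g x"
      proof (cases "x \<in> B2")
        case True
        then have "\<sigma> (fst x - n, snd x - n) = x" by (cases x) (auto simp: B2_def \<sigma>_def)
        with True show ?thesis by simp
      next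
        case False
        have "\<not> g x" using g False unfolding MM_def by blast
        then show ?thesis using False by simp
      qed
    qed
    show "g \<circ> \<sigma> \<in> MM (BX m)" unfolding MM_def
    proof (intro CollectI allI impI)
      fix x assume "(g \<circ> \<sigma>) x"
      moreover have "\<forall>y. g y \<longrightarrow> y \<in> B2" using g unfolding MM_def by blast
      ultimately have "\<sigma> x \<in> B2" by (metis comp_apply)
      then show "x \<in> BX m" by (cases x) (auto simp: B2_def \<sigma>_def BX_def)
    qed
    have eqp: "WW p (BX m) (g \<circ> \<sigma>) = WW p B2 g"
    proof -
      have "B2 = \<sigma> ` BX m"
      proof (rule set_eqI, rule iffI)
        fix x assume "x \<in> B2"
        then have "x = \<sigma> (fst x - n, snd x - n)" "(fst x - n, snd x - n) \<in> BX m"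
          by (cases x; auto simp: B2_def \<sigma>_def BX_def)+
        then show "x \<in> \<sigma> ` BX m" by blast
      next
        fix x assume "x \<in> \<sigma> ` BX m" then show "x \<in> B2" by (auto simp: B2_def \<sigma>_def BX_def)
      qed
      moreover have "inj_on \<sigma> (BX m)" by (rule inj_onI) (auto simp: \<sigma>_def prod_eq_iff)
      ultimately show ?thesis unfolding WW_def by (simp add: prod.reindex)
    qed
    have "(\<lambda>i j. curry g (i + n) (j + n)) = curry (g \<circ> \<sigma>)" by (simp add: fun_eq_iff \<sigma>_def)
    then show "WW p (BX m) (g \<circ> \<sigma>) * real (F m (curry (g \<circ> \<sigma>)))
        = WW p B2 g * real (F m (\<lambda>i j. curry g (i + n) (j + n)))" using eqp by simp
  next
    fix h assume h: "h \<in> MM (BX m)"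
    show "(\<lambda>x. x \<in> B2 \<and> h (fst x - n, snd x - n)) \<circ> \<sigma> = h"
    proof
      fix x :: "nat \<times> nat"
      show "((\<lambda>x. x \<in> B2 \<and> h (fst x - n, snd x - n)) \<circ> \<sigma>) x = h x"
        using h by (cases x) (auto simp: MM_def B2_def BX_def \<sigma>_def)
    qed
    show "(\<lambda>x. x \<in> B2 \<and> h (fst x - n, snd x - n)) \<in> MM B2" by (auto simp: MM_def)
  qed
  show ?thesis using main T1 T2a T2b by simp
qed

lemma EB_le:
  assumes p: "0 \<le> p" "p \<le> 1" and bd: "\<And>e. F n e \<le> n"
  shows "EB p F n \<le> real n" and "0 \<le> EB p F n"
proof -
  have "EB p F n \<le> (\<Sum>g\<in>MM (BX n). WW p (BX n) g * real n)"
    unfolding EB_def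
    by (rule sum_mono, rule mult_left_mono) (use bd WW_nonneg[OF p] in auto)
  also have "\<dots> = real n" using WW_total[OF BX_fin] by (simp add: sum_distrib_right[symmetric])
  finally show "EB p F n \<le> real n" .
  show "0 \<le> EB p F n" unfolding EB_def using WW_nonneg[OF p] by (intro sum_nonneg) auto
qed



lemma strs_fin: "finite (strs k n)"
proof -
  have "strs k n = {xs. set xs \<subseteq> {..<k} \<and> length xs = n}" by (auto simp: strs_def)
  then show ?thesis using finite_lists_length_eq[of "{..<k}" n] by simp
qed

lemma strs_card: "card (strs k n) = k ^ n"
proof -
  have "strs k n = {xs. set xs \<subseteq> {..<k} \<and> length xs = n}" by (auto simp: strs_def)
  then show ?thesis using card_lists_length_eq[of "{..<k}" n] by simp
qed

lemma strs_split:
  "(\<Sum>w\<in>strs k (n + m). \<phi> w) = (\<Sum>u1\<in>strs k n. \<Sum>u2\<in>strs k m. \<phi> (u1 @ u2))"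
proof -
  have "(\<Sum>p\<in>strs k n \<times> strs k m. \<phi> (fst p @ snd p)) = (\<Sum>w\<in>strs k (n + m). \<phi> w)"
  proof (rule sum.reindex_bij_witness[where i = "\<lambda>w. (take n w, drop n w)" and j = "\<lambda>p. fst p @ snd p"])
    fix a assume "a \<in> strs k n \<times> strs k m"
    then show "(take n (fst a @ snd a), drop n (fst a @ snd a)) = a"
      by (cases a) (auto simp: strs_def)
  next
    fix a assume "a \<in> strs k n \<times> strs k m"
    then show "fst a @ snd a \<in> strs k (n + m)" by (cases a) (auto simp: strs_def)
  next
    fix b assume "b \<in> strs k (n + m)"
    then show "fst (take n b, drop n b) @ snd (take n b, drop n b) = b" by simp
  next
    fix b assume "b \<in> strs k (n + m)"
    then show "(take n b, drop n b) \<in> strs k n \<times> strs k m"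
      by (auto simp: strs_def dest: in_set_takeD in_set_dropD)
  qed simp
  then show ?thesis by (simp add: sum.cartesian_product split_beta)
qed

definition ES :: "nat \<Rightarrow> (nat list \<Rightarrow> nat list \<Rightarrow> nat) \<Rightarrow> nat \<Rightarrow> real" where
  "ES k F n = (\<Sum>u\<in>strs k n. \<Sum>v\<in>strs k n. real (F u v))"

lemma ES_super:
  assumes sup: "\<And>u1 u2 v1 v2. u1 \<in> strs k n \<Longrightarrow> v1 \<in> strs k n \<Longrightarrow> u2 \<in> strs k m \<Longrightarrow> v2 \<in> strs k m
      \<Longrightarrow> F u1 v1 + F u2 v2 \<le> F (u1 @ u2) (v1 @ v2)"
  shows "real k ^ (2 * m) * ES k F n + real k ^ (2 * n) * ES k F m \<le> ES k F (n + m)"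
proof -
  have "ES k F (n + m) = (\<Sum>u1\<in>strs k n. \<Sum>u2\<in>strs k m. \<Sum>v1\<in>strs k n. \<Sum>v2\<in>strs k m. real (F (u1 @ u2) (v1 @ v2)))"
    unfolding ES_def by (simp add: strs_split)
  also have "\<dots> \<ge> (\<Sum>u1\<in>strs k n. \<Sum>u2\<in>strs k m. \<Sum>v1\<in>strs k n. \<Sum>v2\<in>strs k m. real (F u1 v1) + real (F u2 v2))"
    by (intro sum_mono) (use sup in \<open>simp add: of_nat_add[symmetric] del: of_nat_add\<close>)
  finally have 1: "(\<Sum>u1\<in>strs k n. \<Sum>u2\<in>strs k m. \<Sum>v1\<in>strs k n. \<Sum>v2\<in>strs k m. real (F u1 v1) + real (F u2 v2)) \<le> ES k F (n + m)" .
  have 2: "(\<Sum>u1\<in>strs k n. \<Sum>u2\<in>strs k m. \<Sum>v1\<in>strs k n. \<Sum>v2\<in>strs k m. real (F u1 v1) + real (F u2 v2))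
     = real k ^ (2 * m) * ES k F n + real k ^ (2 * n) * ES k F m"
  proof -
    have a: "(\<Sum>u1\<in>strs k n. \<Sum>u2\<in>strs k m. \<Sum>v1\<in>strs k n. \<Sum>v2\<in>strs k m. real (F u1 v1))
        = real k ^ (2 * m) * ES k F n"
      by (simp add: ES_def strs_card sum_distrib_left power_mult mult_ac power2_eq_square)
    have b: "(\<Sum>u1\<in>strs k n. \<Sum>u2\<in>strs k m. \<Sum>v1\<in>strs k n. \<Sum>v2\<in>strs k m. real (F u2 v2))
        = real k ^ (2 * n) * ES k F m"
      by (simp add: ES_def strs_card sum_distrib_left power_mult mult_ac power2_eq_square)
    show ?thesis by (simp only: sum.distrib a b)
  qed
  show ?thesis using 1 2 by simp
qed

lemma ES_le:
  assumes bd: "\<And>u v. u \<in> strs k n \<Longrightarrow> F u v \<le> n"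
  shows "ES k F n \<le> real n * real k ^ (2 * n)" and "0 \<le> ES k F n"
proof -
  have "ES k F n \<le> (\<Sum>u\<in>strs k n. \<Sum>v\<in>strs k n. real n)"
    unfolding ES_def by (intro sum_mono) (use bd in auto)
  also have "\<dots> = real n * real k ^ (2 * n)"
    by (simp add: strs_card power_mult power2_eq_square power_mult_distrib)
  finally show "ES k F n \<le> real n * real k ^ (2 * n)" .
  show "0 \<le> ES k F n" unfolding ES_def by (intro sum_nonneg) auto
qed

lemma P_app_cong:
  assumes "length u1 = n" "length v1 = n"
  shows "lcsPr n r (\<lambda>i j. (u1 @ u2) ! (i - 1) = (v1 @ v2) ! (j - 1)) = lcsPr n r (\<lambda>i j. u1 ! (i - 1) = v1 ! (j - 1))"
    and "lcsPr m r (\<lambda>i j. (u1 @ u2) ! (i + n - 1) = (v1 @ v2) ! (j + n - 1)) = lcsPr m r (\<lambda>i j. u2 ! (i - 1) = v2 ! (j - 1))"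
proof -
  have h1: "(u1 @ u2) ! (i - 1) = u1 ! (i - 1)" if "1 \<le> i" "i \<le> n" for i
  proof -
    have "i - 1 < length u1" using that assms by simp
    then show ?thesis by (rule nth_append_left)
  qed
  have h1v: "(v1 @ v2) ! (i - 1) = v1 ! (i - 1)" if "1 \<le> i" "i \<le> n" for i
  proof -
    have "i - 1 < length v1" using that assms by simp
    then show ?thesis by (rule nth_append_left)
  qed
  have h2: "(u1 @ u2) ! (i + n - 1) = u2 ! (i - 1)" if "1 \<le> i" for i
  proof -
    have "i + n - 1 = length u1 + (i - 1)" using that assms by simp
    then show ?thesis by (simp only: nth_append_length_plus)
  qed
  have h2v: "(v1 @ v2) ! (i + n - 1) = v2 ! (i - 1)" if "1 \<le> i" for i
  proof -
    have "i + n - 1 = length v1 + (i - 1)" using that assms by simp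
    then show ?thesis by (simp only: nth_append_length_plus)
  qed
  show "lcsPr n r (\<lambda>i j. (u1 @ u2) ! (i - 1) = (v1 @ v2) ! (j - 1)) = lcsPr n r (\<lambda>i j. u1 ! (i - 1) = v1 ! (j - 1))"
    by (rule lcsPr_cong) (simp only: h1 h1v)
  show "lcsPr m r (\<lambda>i j. (u1 @ u2) ! (i + n - 1) = (v1 @ v2) ! (j + n - 1)) = lcsPr m r (\<lambda>i j. u2 ! (i - 1) = v2 ! (j - 1))"
    by (rule lcsPr_cong) (simp only: h2 h2v)
qed

lemma Lr_super:
  assumes "length u1 = n" "length v1 = n" "length u2 = m" "length v2 = m"
  shows "Lr r u1 v1 + Lr r u2 v2 \<le> Lr r (u1 @ u2) (v1 @ v2)"
proof -
  note e1 = P_app_cong(1)[OF assms(1,2)]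
  note e2 = P_app_cong(2)[OF assms(1,2)]
  show ?thesis
  using lcsPr_super[of n r "\<lambda>i j. (u1 @ u2) ! (i - 1) = (v1 @ v2) ! (j - 1)" m]
    assms e1 e2
  by (simp add: Lr_def)
qed

lemma L_Lr: "length u \<le> r + 1 \<Longrightarrow> Lr r u v = L u v"
  by (simp add: Lr_def L_def lcsP_eq)

lemma L_Lr_n: "L u v = Lr (length u) u v"
  by (simp add: L_Lr)

lemma L_super:
  assumes "length u1 = n" "length v1 = n" "length u2 = m" "length v2 = m"
  shows "L u1 v1 + L u2 v2 \<le> L (u1 @ u2) (v1 @ v2)"
proof -
  have "L u1 v1 = Lr (n + m) u1 v1" "L u2 v2 = Lr (n + m) u2 v2" "L (u1 @ u2) (v1 @ v2) = Lr (n+m) (u1 @ u2) (v1 @ v2)"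
    using assms by (simp_all add: L_Lr)
  then show ?thesis using Lr_super[OF assms, of "n+m"] by simp
qed

lemma EL_ES: "EL k n = ES k L n / real k ^ (2 * n)"
  by (simp add: EL_def ES_def)

lemma ELr_ES: "ELr n k r = ES k (Lr r) n / real k ^ (2 * n)"
  by (simp add: ELr_def ES_def)

lemma aux_div:
  fixes A B x y z :: real
  assumes "A > 0" "B > 0" "B * x + A * y \<le> z"
  shows "x / A + y / B \<le> z / (A * B)"
proof -
  have "x / A + y / B = (B * x + A * y) / (A * B)" using assms(1,2) by (simp add: field_simps)
  also have "\<dots> \<le> z / (A * B)" using assms by (intro divide_right_mono) auto
  finally show ?thesis .
qed

lemma ES_superadd:
  assumes k: "k \<ge> 1"
    and sup: "\<And>u1 u2 v1 v2. length u1 = n \<Longrightarrow> length v1 = n \<Longrightarrow> length u2 = m \<Longrightarrow> length v2 = m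
      \<Longrightarrow> F u1 v1 + F u2 v2 \<le> F (u1 @ u2) (v1 @ v2)"
  shows "ES k F n / real k ^ (2 * n) + ES k F m / real k ^ (2 * m) \<le> ES k F (n + m) / real k ^ (2 * (n + m))"
proof -
  have kp: "real k ^ j > 0" for j using k by simp
  have "real k ^ (2 * m) * ES k F n + real k ^ (2 * n) * ES k F m \<le> ES k F (n + m)"
    by (rule ES_super) (use sup in \<open>auto simp: strs_def\<close>)
  moreover have "real k ^ (2 * (n + m)) = real k ^ (2 * n) * real k ^ (2 * m)"
    by (simp add: power_add[symmetric] algebra_simps)
  ultimately show ?thesis using aux_div[OF kp[of "2*n"] kp[of "2*m"]] by simp
qed



lemma ELB_EB: "ELB k n = EB (1 / real k) (\<lambda>n e. lcsP n e) n"
  by (simp add: ELB_def EB_def sum_bmats)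

lemma ELBr_EB: "ELBr n k r = EB (1 / real k) (\<lambda>n e. lcsPr n r e) n"
  by (simp add: ELBr_def EB_def sum_bmats)

lemma bern_part:
  assumes k: "k \<ge> 2"
  shows "(\<lambda>r. gammaB_r k r) \<longlonglongrightarrow> gammaB k"
proof -
  define p where "p = 1 / real k"
  have p: "0 \<le> p" "p \<le> 1" using k by (auto simp: p_def)
  have "(\<lambda>r. lim (\<lambda>n. ELBr n k r / real n)) \<longlonglongrightarrow> lim (\<lambda>n. ELB k n / real n)"
  proof (rule squeeze_lim)
    fix n m
    show "ELB k n + ELB k m \<le> ELB k (n + m)"
      unfolding ELB_EB p_def[symmetric]
      by (rule EB_super[OF p]) (auto intro: lcsP_cong lcsP_super)
    show "0 \<le> ELB k n" unfolding ELB_EB p_def[symmetric] by (rule EB_le(2)[OF p lcsP_le_n])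
    show "ELB k n \<le> real n" unfolding ELB_EB p_def[symmetric] by (rule EB_le(1)[OF p lcsP_le_n])
  next
    fix r n m
    show "ELBr n k r + ELBr m k r \<le> ELBr (n + m) k r"
      unfolding ELBr_EB p_def[symmetric]
      by (rule EB_super[OF p]) (auto intro: lcsPr_cong lcsPr_super)
  next
    fix r n
    show "0 \<le> ELBr n k r" unfolding ELBr_EB p_def[symmetric] by (rule EB_le(2)[OF p lcsPr_le_n])
    show "ELBr n k r \<le> ELB k n"
      unfolding ELBr_EB ELB_EB p_def[symmetric] EB_def
      by (intro sum_mono mult_left_mono) (auto simp: lcsPr_le_lcsP WW_nonneg[OF p])
    assume "n \<le> r + 1"
    then show "ELBr n k r = ELB k n"
      unfolding ELBr_EB ELB_EB by (simp add: lcsP_eq EB_def)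
  qed
  then show ?thesis unfolding gammaB_r_def gammaB_def .
qed

lemma L_le: "u \<in> strs k n \<Longrightarrow> L u v \<le> n"
  by (simp add: L_def strs_def lcsP_le_n)

lemma Lr_le: "u \<in> strs k n \<Longrightarrow> Lr r u v \<le> n"
  by (simp add: Lr_def strs_def lcsPr_le_n)

lemma str_part:
  assumes k: "k \<ge> 2"
  shows "(\<lambda>r. gamma_r k r) \<longlonglongrightarrow> gamma k"
proof -
  have k1: "k \<ge> 1" using k by simp
  have kp: "real k ^ j > 0" for j using k by simp
  have "(\<lambda>r. lim (\<lambda>n. ELr n k r / real n)) \<longlonglongrightarrow> lim (\<lambda>n. EL k n / real n)"
  proof (rule squeeze_lim)
    fix n m
    show "EL k n + EL k m \<le> EL k (n + m)"
      unfolding EL_ES by (rule ES_superadd[OF k1]) (rule L_super)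
    show "0 \<le> EL k n" unfolding EL_ES using ES_le(2)[of k n L] L_le kp[of "2*n"] by simp
    have "ES k L n \<le> real n * real k ^ (2 * n)" using ES_le(1)[of k n L] L_le by blast
    then show "EL k n \<le> real n" unfolding EL_ES using kp[of "2*n"] by (simp add: divide_le_eq)
  next
    fix r n m
    show "ELr n k r + ELr m k r \<le> ELr (n + m) k r"
      unfolding ELr_ES by (rule ES_superadd[OF k1]) (rule Lr_super)
  next
    fix r n
    show "0 \<le> ELr n k r" unfolding ELr_ES using ES_le(2)[of k n "Lr r"] Lr_le kp[of "2*n"] by simp
    have "ES k (Lr r) n \<le> ES k L n"
      unfolding ES_def by (intro sum_mono) (simp add: Lr_def L_def lcsPr_le_lcsP)
    then show "ELr n k r \<le> EL k n" unfolding ELr_ES EL_ES using kp[of "2*n"] by (simp add: divide_right_mono)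
    assume n: "n \<le> r + 1"
    have "ES k (Lr r) n = ES k L n"
      unfolding ES_def using n by (intro sum.cong refl) (simp add: L_Lr strs_def)
    then show "ELr n k r = EL k n" unfolding ELr_ES EL_ES by simp
  qed
  then show ?thesis unfolding gamma_r_def gamma_def .
qed

theorem mainTheorem1:
  fixes k :: nat
  assumes "k \<ge> 2"
  shows "(\<lambda>r. gammaB_r k r) \<longlonglongrightarrow> gammaB k \<and> (\<lambda>r. gamma_r k r) \<longlonglongrightarrow> gamma k"
  using bern_part[OF assms] str_part[OF assms] by simp

end
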